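(* Let $\Omega=[0,L]$ with $L>0$, and let $\boldsymbol{\varphi},\mathbf{v}_\varphi,\mathbf{N},\mathbf{M}:[0,L]\to\mathbb{R}^3$ and $\mathbf{d}=(\mathbf{d}_1,\mathbf{d}_2,\mathbf{d}_3),\ \mathbf{v}_d=(\mathbf{v}_{d,1},\mathbf{v}_{d,2},\mathbf{v}_{d,3}):[0,L]\to\mathbb{R}^9$ be continuously differentiable, where for every $s\in[0,L]$ the vectors $\mathbf{d}_1(s),\mathbf{d}_2(s),\mathbf{d}_3(s)$ are orthonormal with $\mathbf{d}_3=\mathbf{d}_1\times\mathbf{d}_2$. Set $\mathbf{R}=[\mathbf{d}_1\ \mathbf{d}_2\ \mathbf{d}_3]\in\mathbb{R}^{3\times3}$, $\mathbf{n}=\mathbf{R}\mathbf{N}$, $\mathbf{m}=\mathbf{R}\mathbf{M}$ and $\boldsymbol{\omega}=\tfrac12\sum_{i=1}^3 \mathbf{d}_i\times\mathbf{v}_{d,i}$. Then $$\int_0^L\Big(\mathbf{N}^\top\big(\mathbf{R}^\top\partial_s\mathbf{v}_\varphi+\mathbf{J}_N(\partial_s\boldsymbol{\varphi})^\top\mathbf{v}_d\big)+\mathbf{M}^\top\mathcal{J}_K\mathbf{v}_d\Big)\,ds-\int_0^L\Big(-\mathbf{v}_\varphi^\top\partial_s(\mathbf{R}\mathbf{N})+\mathbf{v}_d^\top\big(\mathbf{J}_N(\partial_s\boldsymbol{\varphi})\mathbf{N}+\mathcal{J}_M\mathbf{M}\big)\Big)\,ds=\Big[\mathbf{v}_\v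arphi^\top\mathbf{n}+\boldsymbol{\omega}^\top\mathbf{m}\Big]_{s=0}^{s=L}.$$
   Context: For $\mathbf{a}\in\mathbb{R}^3$, $\mathbf{J}_N(\mathbf{a})\in\mathbb{R}^{9\times3}$ is the block-diagonal matrix with the column $\mathbf{a}$ in each of its three diagonal $3\times1$ blocks (so $\mathbf{J}_N(\mathbf{a})^\top\mathbf{d}=(\mathbf{d}_1^\top\mathbf{a},\mathbf{d}_2^\top\mathbf{a},\mathbf{d}_3^\top\mathbf{a})$). For $\mathbf{d}=(\mathbf{d}_1,\mathbf{d}_2,\mathbf{d}_3)\in\mathbb{R}^9$, $\mathbf{L}(\mathbf{d})\in\mathbb{R}^{3\times9}$ is $\frac12\begin{bmatrix}\mathbf{0}&-\mathbf{d}_3^\top&\mathbf{d}_2^\top\\ \mathbf{d}_3^\top&\mathbf{0}&-\mathbf{d}_1^\top\\ -\mathbf{d}_2^\top&\mathbf{d}_1^\top&\mathbf{0}\end{bmatrix}$. The operators are $\mathcal{J}_K\mathbf{v}_d=\mathbf{L}(\partial_s\mathbf{d})\mathbf{v}_d-\mathbf{L}(\mathbf{d})\partial_s\mathbf{v}_d$ and $\mathcal{J}_M\mathbf{M}=\mathbf{L}(\partial_s\mathbf{d})^\top\mathbf{M}+\partial_s\big(\mathbf{L}(\mathbf{d})^\top\mathbf{M}\big)$. $[f]_{s=0}^{s=L}=f(L)-f(0)$. *)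

theory Defs
  imports "HOL-Analysis.Analysis"
begin

text \<open>Vectors in R^9 are represented as three stacked blocks in R^3, i.e. elements of
  real^3^3, where d$1, d$2, d$3 are the blocks d_1, d_2, d_3.  The inner product on
  real^3^3 is the standard R^9 inner product.\<close>

definition C1_on :: "real set \<Rightarrow> (real \<Rightarrow> 'a::real_normed_vector) \<Rightarrow> bool" where
  "C1_on S f \<longleftrightarrow> (\<exists>f'. (\<forall>x\<in>S. (f has_vector_derivative f' x) (at x within S)) \<and> continuous_on S f')"

definition dS :: "real set \<Rightarrow> (real \<Rightarrow> 'a::real_normed_vector) \<Rightarrow> real \<Rightarrow> 'a" where
  "dS S f s = vector_derivative f (at s within S)"

text \<open>J_N(a) (9x3 block diagonal with a in each diagonal block): action and transpose action.\<close>
definition JN :: "real^3 \<Rightarrow> real^3 \<Rightarrow> real^3^3" where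
  "JN a x = (\<chi> i. x$i *\<^sub>R a)"

definition JNT :: "real^3 \<Rightarrow> real^3^3 \<Rightarrow> real^3" where
  "JNT a d = (\<chi> i. d$i \<bullet> a)"

text \<open>The (k,j) block (a row vector in R^3) of the 3x9 matrix L(d).\<close>
definition Lblock :: "real^3^3 \<Rightarrow> 3 \<Rightarrow> 3 \<Rightarrow> real^3" where
  "Lblock d k j = (1/2) *\<^sub>R
     (if k = 1 \<and> j = 2 then - d$3
      else if k = 1 \<and> j = 3 then d$2
      else if k = 2 \<and> j = 1 then d$3
      else if k = 2 \<and> j = 3 then - d$1
      else if k = 3 \<and> j = 1 then - d$2
      else if k = 3 \<and> j = 2 then d$1
      else 0)"

definition Lmat :: "real^3^3 \<Rightarrow> real^3^3 \<Rightarrow> real^3" where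
  "Lmat d v = (\<chi> k. \<Sum>j\<in>UNIV. Lblock d k j \<bullet> v$j)"

definition LmatT :: "real^3^3 \<Rightarrow> real^3 \<Rightarrow> real^3^3" where
  "LmatT d M = (\<chi> j. \<Sum>k\<in>UNIV. M$k *\<^sub>R Lblock d k j)"

text \<open>R = [d_1 d_2 d_3] (columns d_i).\<close>
definition Rmat :: "real^3^3 \<Rightarrow> real^3^3" where
  "Rmat d = transpose d"

end

theory Submission
  imports Defs
begin

lemma bb_R: "bounded_bilinear (\<lambda>(d::real^3^3) (x::real^3). Rmat d *v x)"
  unfolding bilinear_conv_bounded_bilinear[symmetric] bilinear_def
  by (auto intro!: linearI simp: Rmat_def transpose_def matrix_vector_mult_def vec_eq_iff sum.distrib algebra_simps sum_distrib_left)

lemma bb_RT: "bounded_bilinear (\<lambda>(d::real^3^3) (x::real^3). transpose (Rmat d) *v x)"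
  unfolding bilinear_conv_bounded_bilinear[symmetric] bilinear_def
  by (auto intro!: linearI simp: Rmat_def transpose_def matrix_vector_mult_def vec_eq_iff sum.distrib algebra_simps sum_distrib_left)

lemma bb_JN: "bounded_bilinear JN"
  unfolding bilinear_conv_bounded_bilinear[symmetric] bilinear_def
  by (auto intro!: linearI simp: JN_def vec_eq_iff algebra_simps)

lemma bb_JNT: "bounded_bilinear JNT"
  unfolding bilinear_conv_bounded_bilinear[symmetric] bilinear_def
  by (auto intro!: linearI simp: JNT_def vec_eq_iff algebra_simps inner_add_left inner_add_right)

lemma Lblock_add: "Lblock (d + e) k j = Lblock d k j + Lblock e k j"
  by (simp add: Lblock_def algebra_simps)
lemma Lblock_scale: "Lblock (c *\<^sub>R d) k j = c *\<^sub>R Lblock d k j"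
  by (simp add: Lblock_def algebra_simps)

lemma bb_L: "bounded_bilinear Lmat"
  unfolding bilinear_conv_bounded_bilinear[symmetric] bilinear_def
  by (auto intro!: linearI simp: Lmat_def Lblock_add Lblock_scale vec_eq_iff sum.distrib algebra_simps inner_add_left inner_add_right sum_distrib_left)

lemma bb_LT: "bounded_bilinear LmatT"
  unfolding bilinear_conv_bounded_bilinear[symmetric] bilinear_def
  by (auto intro!: linearI simp: LmatT_def Lblock_add Lblock_scale vec_eq_iff sum.distrib algebra_simps sum_distrib_left scaleR_sum_right)

lemma adj_R: "(n::real^3) \<bullet> (transpose (Rmat d) *v w) = (Rmat d *v n) \<bullet> w"
  by (simp add: Rmat_def inner_vec_def sum_3 matrix_vector_mult_def transpose_def algebra_simps)

lemma adj_J: "n \<bullet> JNT a v = v \<bullet> JN a n"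
  by (simp add: JN_def JNT_def inner_vec_def sum_3 algebra_simps)

lemma adj_L: "m \<bullet> Lmat d v = v \<bullet> LmatT d m"
  by (simp add: Lmat_def LmatT_def Lblock_def inner_vec_def sum_3 algebra_simps)

lemma bnd:
  fixes d v :: "real^3^3" and m :: "real^3"
  assumes o: "\<forall>i j. d $ i \<bullet> d $ j = (if i = j then 1 else 0)"
    and c: "d $ 3 = cross3 (d $ 1) (d $ 2)"
  shows "- (m \<bullet> Lmat d v) = ((1/2) *\<^sub>R (\<Sum>i\<in>UNIV. cross3 (d $ i) (v $ i))) \<bullet> (Rmat d *v m)"
proof -
  define a b e where "a = d$1" "b = d$2" "e = d$3"
  have o': "a \<bullet> a = 1" "b \<bullet> b = 1" "e \<bullet> e = 1" "a \<bullet> b = 0" "b \<bullet> e = 0" "a \<bullet> e = 0" "b \<bullet> a = 0" "e \<bullet> b = 0" "e \<bullet> a = 0"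
    using o unfolding a_b_e_def by auto
  have ab: "cross3 a b = e" using c a_b_e_def by simp
  have be: "cross3 b e = a" unfolding ab[symmetric] Lagrange using o' by simp
  have ea: "cross3 e a = b" unfolding ab[symmetric] by (subst cross_skew) (simp add: Lagrange o')
  have Rm: "Rmat d *v m = m$1 *\<^sub>R a + m$2 *\<^sub>R b + m$3 *\<^sub>R e"
    by (simp add: a_b_e_def Rmat_def vec_eq_iff matrix_vector_mult_def sum_3 transpose_def algebra_simps)
  have tr: "\<And>x y z. cross3 x y \<bullet> z = y \<bullet> cross3 z x"
    by (metis cross_triple inner_commute)
  show ?thesis
    unfolding Rm
    apply (simp add: sum_3 inner_add_left inner_add_right tr Lmat_def Lblock_def inner_vec_def[of m])
    apply (simp add: a_b_e_def[symmetric] ab be ea cross_skew[of b a] cross_skew[of e b] cross_skew[of a e] o')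
    apply (simp add: field_simps inner_commute)
    done
qed

lemma cont_bb: "bounded_bilinear B \<Longrightarrow> continuous_on S f \<Longrightarrow> continuous_on S g \<Longrightarrow> continuous_on S (\<lambda>x. B (f x) (g x))"
  by (rule bounded_bilinear.continuous_on)

lemma der_bb: "bounded_bilinear B \<Longrightarrow> (f has_vector_derivative f') (at x within S) \<Longrightarrow> (g has_vector_derivative g') (at x within S)
  \<Longrightarrow> ((\<lambda>x. B (f x) (g x)) has_vector_derivative (B (f x) g' + B f' (g x))) (at x within S)"
  by (rule bounded_bilinear.has_vector_derivative)

lemma cont_R: "continuous_on S f \<Longrightarrow> continuous_on S g \<Longrightarrow> continuous_on S (\<lambda>x. Rmat (f x) *v g x)"
  using cont_bb[OF bb_R] by simp
lemma cont_RT: "continuous_on S f \<Longrightarrow> continuous_on S g \<Longrightarrow> continuous_on S (\<lambda>x. transpose (Rmat (f x)) *v g x)"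
  using cont_bb[OF bb_RT] by simp
lemmas cont_JN = cont_bb[OF bb_JN] and cont_JNT = cont_bb[OF bb_JNT] and cont_L = cont_bb[OF bb_L]
  and cont_LT = cont_bb[OF bb_LT]

lemma der_R: "(f has_vector_derivative f') (at x within S) \<Longrightarrow> (g has_vector_derivative g') (at x within S)
  \<Longrightarrow> ((\<lambda>x. Rmat (f x) *v g x) has_vector_derivative (Rmat (f x) *v g' + Rmat f' *v g x)) (at x within S)"
  using der_bb[OF bb_R] by simp
lemmas der_L = der_bb[OF bb_L] and der_LT = der_bb[OF bb_LT] and der_inner = der_bb[OF bounded_bilinear_inner]

lemma C1_get:
  assumes "C1_on {0..L} f" "0 < L"
  obtains f' where "\<And>x. x \<in> {0..L} \<Longrightarrow> (f has_vector_derivative f' x) (at x within {0..L})"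
    "continuous_on {0..L} f'" "continuous_on {0..L} f"
    "\<And>x. x \<in> {0..L} \<Longrightarrow> dS {0..L} f x = f' x"
proof -
  from assms obtain f' where h: "\<And>x. x \<in> {0..L} \<Longrightarrow> (f has_vector_derivative f' x) (at x within {0..L})"
    "continuous_on {0..L} f'" unfolding C1_on_def by blast
  have "dS {0..L} f x = f' x" if "x \<in> {0..L}" for x
    using vector_derivative_within_cbox[of 0 L x f "f' x"] h(1)[OF that] that assms(2)
    by (simp add: dS_def)
  then show ?thesis using that h continuous_on_vector_derivative[of "{0..L}" f f'] by blast
qed

theorem mainTheorem1:
  fixes L :: real
    and phi vphi N M :: "real \<Rightarrow> real^3"
    and d vd :: "real \<Rightarrow> real^3^3"
  assumes "L > 0"
    and "C1_on {0..L} phi" "C1_on {0..L} vphi" "C1_on {0..L} N" "C1_on {0..L} M"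
    and "C1_on {0..L} d" "C1_on {0..L} vd"
    and "\<forall>s\<in>{0..L}. \<forall>i j. d s $ i \<bullet> d s $ j = (if i = j then 1 else 0)"
    and "\<forall>s\<in>{0..L}. d s $ 3 = cross3 (d s $ 1) (d s $ 2)"
  shows
   "integral {0..L} (\<lambda>s.
        N s \<bullet> (transpose (Rmat (d s)) *v dS {0..L} vphi s + JNT (dS {0..L} phi s) (vd s))
      + M s \<bullet> (Lmat (dS {0..L} d s) (vd s) - Lmat (d s) (dS {0..L} vd s)))
    - integral {0..L} (\<lambda>s.
        - (vphi s \<bullet> dS {0..L} (\<lambda>t. Rmat (d t) *v N t) s)
      + vd s \<bullet> (JN (dS {0..L} phi s) (N s)
                + (LmatT (dS {0..L} d s) (M s) + dS {0..L} (\<lambda>t. LmatT (d t) (M t)) s)))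
    = (vphi L \<bullet> (Rmat (d L) *v N L)
         + ((1/2) *\<^sub>R (\<Sum>i\<in>UNIV. cross3 (d L $ i) (vd L $ i))) \<bullet> (Rmat (d L) *v M L))
      - (vphi 0 \<bullet> (Rmat (d 0) *v N 0)
         + ((1/2) *\<^sub>R (\<Sum>i\<in>UNIV. cross3 (d 0 $ i) (vd 0 $ i))) \<bullet> (Rmat (d 0) *v M 0))"
proof -
  let ?S = "{0..L::real}"
  obtain phi' where phi: "\<And>x. x \<in> ?S \<Longrightarrow> (phi has_vector_derivative phi' x) (at x within ?S)"
    "continuous_on ?S phi'" "continuous_on ?S phi" "\<And>x. x \<in> ?S \<Longrightarrow> dS ?S phi x = phi' x"
    using C1_get[OF assms(2,1)] by blast
  obtain vphi' where vphi: "\<And>x. x \<in> ?S \<Longrightarrow> (vphi has_vector_derivative vphi' x) (at x within ?S)"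
    "continuous_on ?S vphi'" "continuous_on ?S vphi" "\<And>x. x \<in> ?S \<Longrightarrow> dS ?S vphi x = vphi' x"
    using C1_get[OF assms(3,1)] by blast
  obtain N' where N: "\<And>x. x \<in> ?S \<Longrightarrow> (N has_vector_derivative N' x) (at x within ?S)"
    "continuous_on ?S N'" "continuous_on ?S N" "\<And>x. x \<in> ?S \<Longrightarrow> dS ?S N x = N' x"
    using C1_get[OF assms(4,1)] by blast
  obtain M' where M: "\<And>x. x \<in> ?S \<Longrightarrow> (M has_vector_derivative M' x) (at x within ?S)"
    "continuous_on ?S M'" "continuous_on ?S M" "\<And>x. x \<in> ?S \<Longrightarrow> dS ?S M x = M' x"
    using C1_get[OF assms(5,1)] by blast
  obtain d' where d: "\<And>x. x \<in> ?S \<Longrightarrow> (d has_vector_derivative d' x) (at x within ?S)"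
    "continuous_on ?S d'" "continuous_on ?S d" "\<And>x. x \<in> ?S \<Longrightarrow> dS ?S d x = d' x"
    using C1_get[OF assms(6,1)] by blast
  obtain vd' where vd: "\<And>x. x \<in> ?S \<Longrightarrow> (vd has_vector_derivative vd' x) (at x within ?S)"
    "continuous_on ?S vd'" "continuous_on ?S vd" "\<And>x. x \<in> ?S \<Longrightarrow> dS ?S vd x = vd' x"
    using C1_get[OF assms(7,1)] by blast
  define G' where "G' x = Rmat (d x) *v N' x + Rmat (d' x) *v N x" for x
  define H' where "H' x = LmatT (d x) (M' x) + LmatT (d' x) (M x)" for x
  define K' where "K' x = Lmat (d x) (vd' x) + Lmat (d' x) (vd x)" for x
  have Gd: "((\<lambda>t. Rmat (d t) *v N t) has_vector_derivative G' x) (at x within ?S)" if "x \<in> ?S" for x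
    unfolding G'_def by (rule der_R[OF d(1)[OF that] N(1)[OF that]])
  have Hd: "((\<lambda>t. LmatT (d t) (M t)) has_vector_derivative H' x) (at x within ?S)" if "x \<in> ?S" for x
    unfolding H'_def by (rule der_LT[OF d(1)[OF that] M(1)[OF that]])
  have Kd: "((\<lambda>t. Lmat (d t) (vd t)) has_vector_derivative K' x) (at x within ?S)" if "x \<in> ?S" for x
    unfolding K'_def by (rule der_L[OF d(1)[OF that] vd(1)[OF that]])
  have dG: "dS ?S (\<lambda>t. Rmat (d t) *v N t) x = G' x" if "x \<in> ?S" for x
    using vector_derivative_within_cbox[of 0 L x _ "G' x"] Gd[OF that] that assms(1)
    by (simp add: dS_def)
  have dH: "dS ?S (\<lambda>t. LmatT (d t) (M t)) x = H' x" if "x \<in> ?S" for x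
    using vector_derivative_within_cbox[of 0 L x _ "H' x"] Hd[OF that] that assms(1)
    by (simp add: dS_def)
  define F where "F t = vphi t \<bullet> (Rmat (d t) *v N t) - M t \<bullet> Lmat (d t) (vd t)" for t
  define F' where "F' t = (vphi t \<bullet> G' t + vphi' t \<bullet> (Rmat (d t) *v N t))
      - (M t \<bullet> K' t + M' t \<bullet> Lmat (d t) (vd t))" for t
  have Fd: "(F has_vector_derivative F' x) (at x within ?S)" if "x \<in> ?S" for x
    unfolding F_def F'_def
    by (intro derivative_intros der_inner vphi(1) M(1) Gd Kd that)
  define A where "A s = N s \<bullet> (transpose (Rmat (d s)) *v vphi' s + JNT (phi' s) (vd s))
      + M s \<bullet> (Lmat (d' s) (vd s) - Lmat (d s) (vd' s))" for s
  define B where "B s = - (vphi s \<bullet> G' s) + vd s \<bullet> (JN (phi' s) (N s) + (LmatT (d' s) (M s) + H' s))" for s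
  have cA: "continuous_on ?S A" unfolding A_def
    by (intro continuous_intros cont_RT cont_JNT cont_L phi vphi N M d vd)
  have cB: "continuous_on ?S B" unfolding B_def G'_def H'_def
    by (intro continuous_intros cont_R cont_JN cont_LT phi vphi N M d vd)
  have e1: "integral ?S (\<lambda>s.
        N s \<bullet> (transpose (Rmat (d s)) *v dS {0..L} vphi s + JNT (dS {0..L} phi s) (vd s))
      + M s \<bullet> (Lmat (dS {0..L} d s) (vd s) - Lmat (d s) (dS {0..L} vd s))) = integral ?S A"
    by (rule integral_cong) (simp add: A_def phi vphi d vd)
  have e2: "integral ?S (\<lambda>s.
        - (vphi s \<bullet> dS {0..L} (\<lambda>t. Rmat (d t) *v N t) s)
      + vd s \<bullet> (JN (dS {0..L} phi s) (N s)
                + (LmatT (dS {0..L} d s) (M s) + dS {0..L} (\<lambda>t. LmatT (d t) (M t)) s))) = integral ?S B"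
    by (rule integral_cong) (simp add: B_def phi d dG dH)
  have AB: "A s - B s = F' s" for s
    unfolding A_def B_def F'_def G'_def H'_def K'_def inner_add_right inner_diff_right adj_R adj_J adj_L
    by (simp add: algebra_simps inner_commute)
  have "integral ?S A - integral ?S B = integral ?S (\<lambda>s. A s - B s)"
    using integral_diff[OF integrable_continuous_interval[OF cA] integrable_continuous_interval[OF cB]] by simp
  also have "\<dots> = F L - F 0"
    unfolding AB using fundamental_theorem_of_calculus[of 0 L F F'] Fd assms(1) by (simp add: integral_unique)
  finally have main: "integral ?S A - integral ?S B = F L - F 0" .
  have L0: "L \<in> ?S" "0 \<in> ?S" using assms(1) by auto
  show ?thesis unfolding e1 e2 main F_def
    using bnd[where d="d L" and v="vd L" and m="M L"] bnd[where d="d 0" and v="vd 0" and m="M 0"] assms(8,9) L0 by (simp add: algebra_simps)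
qed
end
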